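(* Let $\mathcal{H}=(Q_0,Q_1,\beta)$ be a directed tensor-labeled hypergraph over $\mathbb{R}$. With the conventions $\delta_{\le-1}(\mathcal{H}):=|V_{\mathrm{macro}}|-c_{\mathrm{macro}}$ and $L_{\le-1}:=0$, for every $k\ge0$, $$\mathrm{rank}(L_{\le k})-\mathrm{rank}(L_{\le k-1})=\delta_{\le k-1}(\mathcal{H})-\delta_{\le k}(\mathcal{H}).$$
   Context: $T(\mathbb{R}^{Q_0})=\bigoplus_{k\ge0}(\mathbb{R}^{Q_0})^{\otimes k}$ with the inner product making the standard tensor basis orthonormal; $\pi_{\le k}$ is the orthogonal projection onto degrees $\le k$. A directed tensor-labeled hypergraph is $\mathcal{H}=(Q_0,Q_1,\beta)$ ($Q_0,Q_1$ finite) with $\beta:\mathbb{R}^{Q_1}\to T\times T$ linear, $\beta(\mathbf{1}_e)=(A_e,B_e)$; $\partial_\beta:\mathbf{1}_e\mapsto B_e-A_e$; $L_{\le k}:=(\pi_{\le k}\partial_\beta)^*(\pi_{\le k}\partial_\beta)$ (adjoint with respect to the standard inner products). $V_{\mathrm{macro}}=\{A_e\}\cup\{B_e\}$; macrograph on $V_{\mathrm{macro}}$ with edges $Q_1$, $e:A_e\to B_e$, $c_{\mathrm{macro}}$ its number of weakly connected components; $B_{\mathrm{macro}}:\mathbf{1}_e\mapsto\mathbf{1}_{B_e}-\mathbf{1}_{A_e}$; $\hat\phi:\mathbf{1}_w\mapsto w$; $\delta_{\le k}(\mathcal{H})=\dim(\mathrm{Im}B_{\mathrm{macro}}\cap\mathrm{Ker}(\pi_{\le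 k}\circ\hat\phi))$ for $k\ge0$. *)

theory Defs
  imports "HOL-Analysis.Analysis" "HOL-Library.Function_Algebras"
begin

definition fscale :: "real \<Rightarrow> ('a \<Rightarrow> real) \<Rightarrow> ('a \<Rightarrow> real)" where
  "fscale c f = (\<lambda>x. c * f x)"

global_interpretation fvs: vector_space "fscale :: real \<Rightarrow> ('a \<Rightarrow> real) \<Rightarrow> ('a \<Rightarrow> real)"
  by unfold_locales (auto simp: fscale_def fun_eq_iff algebra_simps)

text \<open>R^S for a set S, realised as the functions vanishing outside S.\<close>
definition coord_space :: "'a set \<Rightarrow> ('a \<Rightarrow> real) set" where
  "coord_space S = {x. \<forall>a. a \<notin> S \<longrightarrow> x a = 0}"

text \<open>An element of T(R^Q0) is a finitely supported function on words over Q0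
(the standard tensor basis; a word of length k is a basis tensor of degree k).
The standard inner product makes words orthonormal.\<close>

definition is_tensor :: "'v set \<Rightarrow> ('v list \<Rightarrow> real) \<Rightarrow> bool" where
  "is_tensor Q0 t \<longleftrightarrow> finite {w. t w \<noteq> 0} \<and> (\<forall>w. t w \<noteq> 0 \<longrightarrow> set w \<subseteq> Q0)"

definition words_le :: "'v set \<Rightarrow> int \<Rightarrow> 'v list set" where
  "words_le Q0 k = {w. set w \<subseteq> Q0 \<and> int (length w) \<le> k}"

definition trunc :: "int \<Rightarrow> ('v list \<Rightarrow> real) \<Rightarrow> ('v list \<Rightarrow> real)" where
  "trunc k t = (\<lambda>w. if int (length w) \<le> k then t w else 0)"

text \<open>A directed tensor-labeled hypergraph (Q0, Q1, beta) with beta(1_e) = (A e, B e).\<close>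
definition tl_hypergraph :: "'v set \<Rightarrow> 'e set \<Rightarrow> ('e \<Rightarrow> 'v list \<Rightarrow> real) \<Rightarrow> ('e \<Rightarrow> 'v list \<Rightarrow> real) \<Rightarrow> bool" where
  "tl_hypergraph Q0 Q1 A B \<longleftrightarrow> finite Q0 \<and> finite Q1 \<and>
     (\<forall>e\<in>Q1. is_tensor Q0 (A e) \<and> is_tensor Q0 (B e))"

definition bdry :: "'e set \<Rightarrow> ('e \<Rightarrow> 'v list \<Rightarrow> real) \<Rightarrow> ('e \<Rightarrow> 'v list \<Rightarrow> real) \<Rightarrow> ('e \<Rightarrow> real) \<Rightarrow> ('v list \<Rightarrow> real)" where
  "bdry Q1 A B x = (\<lambda>w. \<Sum>e\<in>Q1. x e * (B e w - A e w))"

text \<open>Adjoint of trunc k \<circ> bdry with respect to the standard inner products: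
  its value on a tensor t at e is the inner product of trunc k (B_e - A_e) with t.\<close>
definition bdry_adj :: "'v set \<Rightarrow> 'e set \<Rightarrow> ('e \<Rightarrow> 'v list \<Rightarrow> real) \<Rightarrow> ('e \<Rightarrow> 'v list \<Rightarrow> real) \<Rightarrow> int \<Rightarrow> ('v list \<Rightarrow> real) \<Rightarrow> ('e \<Rightarrow> real)" where
  "bdry_adj Q0 Q1 A B k t = (\<lambda>e. if e \<in> Q1 then (\<Sum>w\<in>words_le Q0 k. (B e w - A e w) * t w) else 0)"

definition Lop :: "'v set \<Rightarrow> 'e set \<Rightarrow> ('e \<Rightarrow> 'v list \<Rightarrow> real) \<Rightarrow> ('e \<Rightarrow> 'v list \<Rightarrow> real) \<Rightarrow> int \<Rightarrow> ('e \<Rightarrow> real) \<Rightarrow> ('e \<Rightarrow> real)" where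
  "Lop Q0 Q1 A B k x = bdry_adj Q0 Q1 A B k (trunc k (bdry Q1 A B x))"

definition rankL :: "'v set \<Rightarrow> 'e set \<Rightarrow> ('e \<Rightarrow> 'v list \<Rightarrow> real) \<Rightarrow> ('e \<Rightarrow> 'v list \<Rightarrow> real) \<Rightarrow> int \<Rightarrow> nat" where
  "rankL Q0 Q1 A B k = (if k < 0 then 0 else fvs.dim (Lop Q0 Q1 A B k ` coord_space Q1))"

definition Vmacro :: "'e set \<Rightarrow> ('e \<Rightarrow> 'v list \<Rightarrow> real) \<Rightarrow> ('e \<Rightarrow> 'v list \<Rightarrow> real) \<Rightarrow> ('v list \<Rightarrow> real) set" where
  "Vmacro Q1 A B = A ` Q1 \<union> B ` Q1"

definition macro_conn :: "'e set \<Rightarrow> ('e \<Rightarrow> 'v list \<Rightarrow> real) \<Rightarrow> ('e \<Rightarrow> 'v list \<Rightarrow> real) \<Rightarrow> (('v list \<Rightarrow> real) \<times> ('v list \<Rightarrow> real)) set" where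
  "macro_conn Q1 A B = ({(A e, B e) | e. e \<in> Q1} \<union> {(B e, A e) | e. e \<in> Q1})\<^sup>*"

definition c_macro :: "'e set \<Rightarrow> ('e \<Rightarrow> 'v list \<Rightarrow> real) \<Rightarrow> ('e \<Rightarrow> 'v list \<Rightarrow> real) \<Rightarrow> nat" where
  "c_macro Q1 A B = card (Vmacro Q1 A B // macro_conn Q1 A B)"

definition Bmacro :: "'e set \<Rightarrow> ('e \<Rightarrow> 'v list \<Rightarrow> real) \<Rightarrow> ('e \<Rightarrow> 'v list \<Rightarrow> real) \<Rightarrow> ('e \<Rightarrow> real) \<Rightarrow> (('v list \<Rightarrow> real) \<Rightarrow> real)" where
  "Bmacro Q1 A B x = (\<lambda>v. \<Sum>e\<in>Q1. x e * ((if v = B e then 1 else 0) - (if v = A e then 1 else 0)))"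

definition phihat :: "'e set \<Rightarrow> ('e \<Rightarrow> 'v list \<Rightarrow> real) \<Rightarrow> ('e \<Rightarrow> 'v list \<Rightarrow> real) \<Rightarrow> (('v list \<Rightarrow> real) \<Rightarrow> real) \<Rightarrow> ('v list \<Rightarrow> real)" where
  "phihat Q1 A B y = (\<lambda>w. \<Sum>v\<in>Vmacro Q1 A B. y v * v w)"

definition delta_le :: "'e set \<Rightarrow> ('e \<Rightarrow> 'v list \<Rightarrow> real) \<Rightarrow> ('e \<Rightarrow> 'v list \<Rightarrow> real) \<Rightarrow> int \<Rightarrow> int" where
  "delta_le Q1 A B k =
     (if k < 0 then int (card (Vmacro Q1 A B)) - int (c_macro Q1 A B)
      else int (fvs.dim (Bmacro Q1 A B ` coord_space Q1 \<inter>
                 {y \<in> coord_space (Vmacro Q1 A B). trunc k (phihat Q1 A B y) = (\<lambda>_. 0)})))"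

end

theory Submission
  imports Defs
begin

lemma fvs_span_disjoint:
  fixes Bs :: "('a \<Rightarrow> real) set"
  assumes ind: "fvs.independent Bs" and fin: "finite Bs" and JK: "J \<union> K = Bs" "J \<inter> K = {}"
    and xJ: "x \<in> fvs.span J" and xK: "x \<in> fvs.span K"
  shows "x = 0"
proof -
  have fJ: "finite J" and fK: "finite K" using JK fin by auto
  obtain u where u: "x = (\<Sum>v\<in>J. fscale (u v) v)" using xJ fvs.span_finite[OF fJ] by auto
  obtain w where w: "x = (\<Sum>v\<in>K. fscale (w v) v)" using xK fvs.span_finite[OF fK] by auto
  define c where "c v = (if v \<in> J then u v else - w v)" for v
  have "(\<Sum>v\<in>Bs. fscale (c v) v) = (\<Sum>v\<in>J. fscale (c v) v) + (\<Sum>v\<in>K. fscale (c v) v)"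
    using sum.union_disjoint[OF fJ fK JK(2), of "\<lambda>v. fscale (c v) v"] JK(1) by simp
  also have "(\<Sum>v\<in>J. fscale (c v) v) = x" using u c_def by simp
  also have "(\<Sum>v\<in>K. fscale (c v) v) = - x"
  proof -
    have "(\<Sum>v\<in>K. fscale (c v) v) = (\<Sum>v\<in>K. - fscale (w v) v)"
      using JK by (intro sum.cong) (auto simp: c_def fvs.scale_minus_left)
    then show ?thesis using w by (simp add: sum_negf)
  qed
  finally have z: "(\<Sum>v\<in>Bs. fscale (c v) v) = 0" by (simp add: zero_fun_def)
  have "\<forall>v\<in>J. u v = 0"
  proof
    fix v assume "v \<in> J"
    then have "c v = 0" using fvs.independentD[OF ind fin order.refl z] JK by auto
    then show "u v = 0" using \<open>v \<in> J\<close> c_def by simp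
  qed
  then show ?thesis using u by simp
qed

lemma rank_nullity_fvs:
  fixes f :: "('a \<Rightarrow> real) \<Rightarrow> ('b \<Rightarrow> real)"
  assumes lf: "Vector_Spaces.linear fscale fscale f" and S: "fvs.subspace S"
    and T: "finite T" "S \<subseteq> fvs.span T"
  shows "fvs.dim (f ` S) + fvs.dim {x\<in>S. f x = 0} = fvs.dim S"
proof -
  interpret lf: Vector_Spaces.linear fscale fscale f by (rule lf)
  define K0 where "K0 = {x\<in>S. f x = 0}"
  obtain K where K: "K \<subseteq> K0" "fvs.independent K" "K0 \<subseteq> fvs.span K" "card K = fvs.dim K0"
    by (rule fvs.basis_exists)
  have KS: "K \<subseteq> S" using K(1) K0_def by auto
  obtain Bs where Bs: "K \<subseteq> Bs" "Bs \<subseteq> S" "fvs.independent Bs" "S \<subseteq> fvs.span Bs"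
    using fvs.maximal_independent_subset_extend[OF KS K(2)] by blast
  have fB: "finite Bs" using fvs.independent_span_bound[OF T(1) Bs(3)] Bs(2) T(2) by blast
  have cB: "card Bs = fvs.dim S" using fvs.basis_card_eq_dim[OF Bs(2) Bs(4) Bs(3)] .
  have fK: "finite K" using fB Bs(1) finite_subset by blast
  define J where "J = Bs - K"
  have spanS: "fvs.span Bs = S"
    using Bs(2,4) S fvs.span_minimal by blast
  have spJS: "fvs.span J \<subseteq> S" using S Bs(2) J_def fvs.span_minimal by blast
  have inj0: "\<forall>x\<in>fvs.span J. f x = 0 \<longrightarrow> x = 0"
  proof (intro ballI impI)
    fix x assume xJ: "x \<in> fvs.span J" and fx: "f x = 0"
    have "x \<in> fvs.span K" using xJ fx spJS K(3) K0_def by blast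
    then show "x = 0"
      using fvs_span_disjoint[OF Bs(3) fB _ _ xJ, of K] J_def Bs(1) by blast
  qed
  have injJ: "inj_on f (fvs.span J)"
    using lf.inj_on_iff_eq_0[OF fvs.subspace_span] inj0 by blast
  have indJ: "fvs.independent (f ` J)"
    using lf.independent_injective_image[OF fvs.independent_mono[OF Bs(3)] injJ] J_def by blast
  have cJ: "card (f ` J) = card J"
    by (rule card_image[OF inj_on_subset[OF injJ fvs.span_superset]])
  have imS: "f ` S = fvs.span (f ` Bs)" using lf.span_image[of Bs] spanS by simp
  have spBJ: "fvs.span (f ` Bs) = fvs.span (f ` J)"
  proof -
    have "f ` Bs = f ` J \<union> f ` K" using J_def Bs(1) by blast
    moreover have "f ` K \<subseteq> {0}" using K(1) K0_def by auto
    ultimately have "f ` Bs \<subseteq> insert 0 (f ` J)" "f ` J \<subseteq> f ` Bs" by auto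
    then have "fvs.span (f ` Bs) \<subseteq> fvs.span (f ` J)"
      using fvs.span_mono[of "f ` Bs" "insert 0 (f ` J)"] fvs.span_insert_0 by simp
    then show ?thesis using fvs.span_mono[of "f ` J" "f ` Bs"] \<open>f ` J \<subseteq> f ` Bs\<close> by blast
  qed
  have spS: "fvs.span (f ` S) = f ` S"
    using fvs.span_eq_iff[of "f ` S"] lf.subspace_image[OF S] by blast
  have "fvs.span (f ` J) = f ` S" using imS spBJ by simp
  then have "fvs.span (f ` J) = fvs.span (f ` S)" unfolding spS .
  then have dimf: "fvs.dim (f ` S) = card J" using fvs.dim_eq_card[OF _ indJ] cJ by simp
  have "card Bs = card J + card K"
    using card_Diff_subset[OF fK Bs(1)] card_mono[OF fB Bs(1)] J_def by simp
  then show ?thesis using dimf K(4) cB K0_def by simp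
qed

lemma rtrancl_add_sym_edge:
  assumes sE: "sym E"
  shows "(E \<union> {(p,q),(q,p)})\<^sup>* = E\<^sup>* \<union> {(x,y). (x,p)\<in>E\<^sup>* \<and> (q,y)\<in>E\<^sup>*} \<union> {(x,y). (x,q)\<in>E\<^sup>* \<and> (p,y)\<in>E\<^sup>*}"
    (is "?L = ?R")
proof
  have sR: "(x,y) \<in> E\<^sup>* \<Longrightarrow> (y,x) \<in> E\<^sup>*" for x y
    using sE sym_rtrancl symD by metis
  show "?L \<subseteq> ?R"
  proof
    fix z assume "z \<in> ?L"
    then obtain x y where z: "z = (x,y)" and xy: "(x,y) \<in> ?L" by (cases z) auto
    from xy have "(x,y) \<in> ?R"
    proof (induction rule: rtrancl_induct)
      case base then show ?case by simp
    next
      case (step y z)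
      from step.hyps(2) consider "(y,z) \<in> E" | "y = p" "z = q" | "y = q" "z = p" by blast
      then show ?case
      proof cases
        case 1
        then show ?thesis using step.IH by (auto intro: rtrancl_into_rtrancl)
      next
        case 2
        then show ?thesis using step.IH sR by (auto intro: rtrancl_trans)
      next
        case 3
        then show ?thesis using step.IH sR by (auto intro: rtrancl_trans)
      qed
    qed
    then show "z \<in> ?R" using z by simp
  qed
next
  have sub: "E\<^sup>* \<subseteq> ?L" by (rule rtrancl_mono) blast
  have pq: "(p,q) \<in> ?L" "(q,p) \<in> ?L" by auto
  show "?R \<subseteq> ?L"
  proof
    fix z assume "z \<in> ?R"
    then show "z \<in> ?L" using sub pq by (auto intro: rtrancl_trans)
  qed
qed

lemma quotient_img: "W // R = (\<lambda>x. R `` {x}) ` W"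
  unfolding quotient_def by blast

lemma quotient_mem: "X \<in> W // R \<longleftrightarrow> (\<exists>x\<in>W. X = R``{x})"
  unfolding quotient_def by blast

lemma card_merge:
  assumes sE: "sym E" and fW: "finite W" and pW: "p \<in> W" and qW: "q \<in> W" and npq: "(p,q) \<notin> E\<^sup>*"
  shows "card (W // (E \<union> {(p,q),(q,p)})\<^sup>*) + 1 = card (W // E\<^sup>*)"
proof -
  let ?R = "E\<^sup>*"
  let ?R' = "(E \<union> {(p,q),(q,p)})\<^sup>*"
  have sR: "(x,y) \<in> ?R \<Longrightarrow> (y,x) \<in> ?R" for x y
    using sE sym_rtrancl symD by metis
  have cls: "(x,y) \<in> ?R \<Longrightarrow> ?R``{x} = ?R``{y}" for x y
    using sR by (auto intro: rtrancl_trans)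
  define Cp where "Cp = ?R``{p}"
  define Cq where "Cq = ?R``{q}"
  have R'eq: "?R' = ?R \<union> {(x,y). (x,p)\<in>?R \<and> (q,y)\<in>?R} \<union> {(x,y). (x,q)\<in>?R \<and> (p,y)\<in>?R}"
    by (rule rtrancl_add_sym_edge[OF sE])
  have img: "?R'``{x} = (if x \<in> Cp \<union> Cq then Cp \<union> Cq else ?R``{x})" for x
  proof -
    have mem: "y \<in> ?R'``{x} \<longleftrightarrow> (x,y)\<in>?R \<or> ((x,p)\<in>?R \<and> (q,y)\<in>?R) \<or> ((x,q)\<in>?R \<and> (p,y)\<in>?R)" for y
      using R'eq by auto
    consider "(x,p) \<in> ?R" | "(x,q) \<in> ?R" | "(x,p) \<notin> ?R" "(x,q) \<notin> ?R" by blast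
    then show ?thesis
    proof cases
      case 1
      have e1: "(x,y)\<in>?R \<longleftrightarrow> (p,y)\<in>?R" for y
        using 1 sR[OF 1] rtrancl_trans[of x p E y] rtrancl_trans[of p x E y] by blast
      have xC: "x \<in> Cp" using sR[OF 1] Cp_def by simp
      show ?thesis using xC e1 mem[of _] unfolding Cp_def Cq_def by auto
    next
      case 2
      have e1: "(x,y)\<in>?R \<longleftrightarrow> (q,y)\<in>?R" for y
        using 2 sR[OF 2] rtrancl_trans[of x q E y] rtrancl_trans[of q x E y] by blast
      have xC: "x \<in> Cq" using sR[OF 2] Cq_def by simp
      show ?thesis using xC e1 mem[of _] unfolding Cp_def Cq_def by auto
    next
      case 3
      have xC: "x \<notin> Cp \<union> Cq" using 3 sR Cp_def Cq_def by blast
      show ?thesis using xC 3 mem[of _] by auto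
    qed
  qed
  have CpCq: "Cp \<noteq> Cq" using npq Cp_def Cq_def by auto
  have Cp_in: "Cp \<in> W // ?R" "Cq \<in> W // ?R" using pW qW Cp_def Cq_def quotient_mem by blast+
  have eq: "W // ?R' = insert (Cp \<union> Cq) (W // ?R - {Cp, Cq})"
  proof
    show "W // ?R' \<subseteq> insert (Cp \<union> Cq) (W // ?R - {Cp, Cq})"
    proof
      fix X assume "X \<in> W // ?R'"
      then obtain x where x: "x \<in> W" "X = ?R'``{x}" unfolding quotient_mem by blast
      show "X \<in> insert (Cp \<union> Cq) (W // ?R - {Cp, Cq})"
      proof (cases "x \<in> Cp \<union> Cq")
        case True then show ?thesis using x img by simp
      next
        case False
        have "x \<in> ?R``{x}" by simp
        then have "?R``{x} \<noteq> Cp" "?R``{x} \<noteq> Cq" using False by blast+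
        moreover have "?R``{x} \<in> W // ?R" using x(1) quotient_mem by blast
        moreover have "X = ?R``{x}" using x img False by simp
        ultimately show ?thesis by blast
      qed
    qed
  next
    show "insert (Cp \<union> Cq) (W // ?R - {Cp, Cq}) \<subseteq> W // ?R'"
    proof
      fix X assume X: "X \<in> insert (Cp \<union> Cq) (W // ?R - {Cp, Cq})"
      show "X \<in> W // ?R'"
      proof (cases "X = Cp \<union> Cq")
        case True
        have "p \<in> Cp" using Cp_def by auto
        then have e: "?R'``{p} = Cp \<union> Cq" using img by simp
        show ?thesis unfolding quotient_mem True by (rule bexI[of _ p]) (use e pW in auto)
      next
        case False
        have XR: "X \<in> W // ?R" "X \<noteq> Cp" "X \<noteq> Cq" using X False by blast+
        obtain x where x0: "x \<in> W" "X = ?R``{x}" using XR(1) unfolding quotient_mem by blast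
        have x: "x \<in> W" "X = ?R``{x}" "X \<noteq> Cp" "X \<noteq> Cq" using x0 XR by auto
        have "x \<notin> Cp \<union> Cq"
        proof
          assume "x \<in> Cp \<union> Cq"
          then have "(p,x) \<in> ?R \<or> (q,x) \<in> ?R" by (simp add: Cp_def Cq_def)
          then have "X = Cp \<or> X = Cq" using cls[of p x] cls[of q x] x(2) Cp_def Cq_def by metis
          then show False using x by blast
        qed
        then have "?R'``{x} = X" using img x by simp
        then show ?thesis using x quotient_mem by blast
      qed
    qed
  qed
  have fin: "finite (W // ?R)" unfolding quotient_img using fW by simp
  have notin: "Cp \<union> Cq \<notin> W // ?R - {Cp, Cq}"
  proof
    assume a: "Cp \<union> Cq \<in> W // ?R - {Cp, Cq}"
    then have ne: "Cp \<union> Cq \<noteq> Cp" by blast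
    from a obtain x where x: "Cp \<union> Cq = ?R``{x}" unfolding quotient_img by blast
    have "p \<in> ?R``{x}" using x Cp_def by auto
    then have "(x,p) \<in> ?R" by simp
    then have "?R``{x} = Cp" using cls[of x p] Cp_def by simp
    then show False using x ne by simp
  qed
  have "card (W // ?R') = card (W // ?R - {Cp, Cq}) + 1"
    using eq notin fin by simp
  also have "card (W // ?R - {Cp, Cq}) = card (W // ?R) - 2"
    using Cp_in CpCq fin by (simp add: card_Diff_subset)
  moreover have "card {Cp, Cq} \<le> card (W // ?R)"
    using card_mono[OF fin] Cp_in by simp
  moreover have "card {Cp, Cq} = 2" using CpCq by simp
  ultimately show ?thesis by linarith
qed

lemma sum_fun_apply: "(\<Sum>i\<in>I. f i) x = (\<Sum>i\<in>I. (f i x :: real))"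
  by (induction I rule: infinite_finite_induct) auto

definition ind :: "'w \<Rightarrow> 'w \<Rightarrow> real" where
  "ind x = (\<lambda>v. if v = x then 1 else 0)"

definition bvec :: "('e \<Rightarrow> 'w) \<Rightarrow> ('e \<Rightarrow> 'w) \<Rightarrow> 'e \<Rightarrow> 'w \<Rightarrow> real" where
  "bvec a b e = (\<lambda>v. (if v = b e then 1 else 0) - (if v = a e then 1 else 0))"

definition gE :: "'e set \<Rightarrow> ('e \<Rightarrow> 'w) \<Rightarrow> ('e \<Rightarrow> 'w) \<Rightarrow> ('w \<times> 'w) set" where
  "gE F a b = {(a e, b e) | e. e \<in> F} \<union> {(b e, a e) | e. e \<in> F}"

lemma bvec_ind: "bvec a b e = ind (b e) - ind (a e)"
  by (simp add: bvec_def ind_def fun_eq_iff)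

lemma sym_gE: "sym (gE F a b)"
  unfolding gE_def sym_def by blast

lemma path_in_span:
  assumes "(x,y) \<in> (gE F a b)\<^sup>*"
  shows "ind y - ind x \<in> fvs.span (bvec a b ` F)"
  using assms
proof (induction rule: rtrancl_induct)
  case base then show ?case by (simp add: fvs.span_zero[unfolded zero_fun_def])
next
  case (step y z)
  have "ind z - ind y \<in> fvs.span (bvec a b ` F)"
  proof -
    from step.hyps(2) obtain e where e: "e \<in> F" "(y = a e \<and> z = b e) \<or> (y = b e \<and> z = a e)"
      unfolding gE_def by blast
    have be: "bvec a b e \<in> fvs.span (bvec a b ` F)" using e(1) fvs.span_base by blast
    show ?thesis
    proof (cases "y = a e \<and> z = b e")
      case True then show ?thesis using be bvec_ind by metis
    next
      case False
      then have yz: "y = b e" "z = a e" using e(2) by auto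
      have "ind z - ind y = - bvec a b e" unfolding yz bvec_ind by simp
      then show ?thesis using fvs.span_neg[OF be] by simp
    qed
  qed
  then have "(ind z - ind y) + (ind y - ind x) \<in> fvs.span (bvec a b ` F)"
    using step.IH fvs.span_add by blast
  moreover have "(ind z - ind y) + (ind y - ind x) = ind z - ind x" by (rule ext) simp
  ultimately show ?case by (simp only:)
qed

lemma not_path_not_span:
  assumes npq: "(p,q) \<notin> (gE F a b)\<^sup>*" and fW: "finite W" and pW: "p \<in> W"
    and ends: "\<forall>e\<in>F. a e \<in> W \<and> b e \<in> W"
  shows "ind q - ind p \<notin> fvs.span (bvec a b ` F)"
proof
  let ?R = "(gE F a b)\<^sup>*"
  have sR: "(x,y) \<in> ?R \<Longrightarrow> (y,x) \<in> ?R" for x y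
    using sym_gE sym_rtrancl symD by metis
  define C where "C = W \<inter> ?R``{p}"
  define \<phi> where "\<phi> y = (\<Sum>v\<in>C. y v)" for y :: "'a \<Rightarrow> real"
  have fC: "finite C" using fW C_def by simp
  have sub: "fvs.subspace {y. \<phi> y = 0}"
  proof (rule fvs.subspaceI)
    show "0 \<in> {y. \<phi> y = 0}" by (simp add: \<phi>_def)
    show "x + y \<in> {y. \<phi> y = 0}" if "x \<in> {y. \<phi> y = 0}" "y \<in> {y. \<phi> y = 0}" for x y
      using that by (simp add: \<phi>_def sum.distrib)
    show "fscale c x \<in> {y. \<phi> y = 0}" if "x \<in> {y. \<phi> y = 0}" for c x
      using that by (simp add: \<phi>_def fscale_def sum_distrib_left[symmetric])
  qed
  have phi_ind: "\<phi> (ind x) = (if x \<in> C then 1 else 0)" for x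
    using fC by (simp add: \<phi>_def ind_def)
  have phi_diff: "\<phi> (ind y - ind x) = \<phi> (ind y) - \<phi> (ind x)" for x y
    by (simp add: \<phi>_def sum_subtractf)
  assume "ind q - ind p \<in> fvs.span (bvec a b ` F)"
  then have "\<phi> (ind q - ind p) = 0"
  proof (rule fvs.span_induct[where P = "\<lambda>y. \<phi> y = 0"])
    show "fvs.subspace (Collect (\<lambda>y. \<phi> y = 0))" using sub by simp
    fix y assume "y \<in> bvec a b ` F"
    then obtain e where e: "e \<in> F" "y = bvec a b e" by blast
    have "(a e, b e) \<in> ?R" using e(1) unfolding gE_def by blast
    then have "(a e \<in> ?R``{p}) = (b e \<in> ?R``{p})" using sR by (auto intro: rtrancl_trans)
    then have "(a e \<in> C) = (b e \<in> C)" using ends e(1) C_def by blast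
    moreover have "\<phi> y = \<phi> (ind (b e)) - \<phi> (ind (a e))"
      unfolding e(2) bvec_ind by (rule phi_diff)
    ultimately show "\<phi> y = 0" unfolding phi_ind by simp
  qed
  moreover have "p \<in> C" using pW C_def by simp
  moreover have "q \<notin> C" using npq C_def by simp
  ultimately show False using phi_diff phi_ind by simp
qed

lemma fvs_dim_insert:
  fixes S :: "('a \<Rightarrow> real) set"
  assumes "finite S"
  shows "fvs.dim (insert x S) = (if x \<in> fvs.span S then fvs.dim S else fvs.dim S + 1)"
proof -
  obtain Bs where Bs: "Bs \<subseteq> S" "fvs.independent Bs" "S \<subseteq> fvs.span Bs" "card Bs = fvs.dim S"
    by (rule fvs.basis_exists)
  have fB: "finite Bs" using Bs(1) assms finite_subset by blast
  show ?thesis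
  proof (cases "x \<in> fvs.span S")
    case True
    then show ?thesis using fvs.span_redundant fvs.span_eq_dim by metis
  next
    case False
    have nx: "x \<notin> fvs.span Bs" using False Bs(1) fvs.span_mono by blast
    have ind: "fvs.independent (insert x Bs)" using fvs.independent_insertI[OF nx Bs(2)] .
    have sp: "fvs.span (insert x Bs) = fvs.span (insert x S)"
      unfolding fvs.span_eq
    proof
      show "insert x Bs \<subseteq> fvs.span (insert x S)" using Bs(1) fvs.span_superset by blast
      show "insert x S \<subseteq> fvs.span (insert x Bs)"
        using Bs(3) fvs.span_superset fvs.span_mono[of Bs "insert x Bs"] by blast
    qed
    have "fvs.dim (insert x S) = card (insert x Bs)"
      using fvs.dim_eq_card[OF sp ind] .
    also have "\<dots> = card Bs + 1"
    proof -
      have "x \<notin> Bs" using nx fvs.span_superset by blast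
      then show ?thesis using fB by simp
    qed
    finally show ?thesis using False Bs(4) by simp
  qed
qed


lemma gE_insert: "gE (insert e F) a b = gE F a b \<union> {(a e, b e), (b e, a e)}"
  unfolding gE_def by blast

lemma graph_rank:
  fixes a b :: "'e \<Rightarrow> 'w"
  assumes fW: "finite W" and fF: "finite F" and ends: "\<forall>e\<in>F. a e \<in> W \<and> b e \<in> W"
  shows "int (fvs.dim (bvec a b ` F)) + int (card (W // (gE F a b)\<^sup>*)) = int (card W)"
  using fF ends
proof (induction F rule: finite_induct)
  case empty
  have d0: "fvs.dim ({} :: ('w \<Rightarrow> real) set) = 0"
    using fvs.dim_eq_card_independent[OF fvs.independent_empty] by simp
  have g0: "gE {} a b = {}" unfolding gE_def by simp
  have "W // Id = (\<lambda>x. {x}) ` W" unfolding quotient_img by simp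
  then have "card (W // Id) = card W" by (simp add: card_image)
  then show ?case using d0 g0 by simp
next
  case (insert e F)
  let ?E = "gE F a b"
  let ?R = "?E\<^sup>*"
  have ends: "\<forall>e\<in>F. a e \<in> W \<and> b e \<in> W" and ae: "a e \<in> W" and be: "b e \<in> W"
    using insert.prems by auto
  have IH: "int (fvs.dim (bvec a b ` F)) + int (card (W // ?R)) = int (card W)"
    using insert.IH[OF ends] .
  have im: "bvec a b ` insert e F = insert (bvec a b e) (bvec a b ` F)" by simp
  have fin: "finite (bvec a b ` F)" using insert.hyps(1) by simp
  have R': "(gE (insert e F) a b)\<^sup>* = (?E \<union> {(a e, b e), (b e, a e)})\<^sup>*"
    unfolding gE_insert ..
  have sR: "(x,y) \<in> ?R \<Longrightarrow> (y,x) \<in> ?R" for x y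
    using sym_gE sym_rtrancl symD by metis
  show ?case
  proof (cases "(a e, b e) \<in> ?R")
    case True
    have "bvec a b e \<in> fvs.span (bvec a b ` F)"
      using path_in_span[OF True] bvec_ind by metis
    then have d: "fvs.dim (bvec a b ` insert e F) = fvs.dim (bvec a b ` F)"
      unfolding im fvs_dim_insert[OF fin] by simp
    have "(?E \<union> {(a e, b e), (b e, a e)})\<^sup>* = ?R"
    proof
      show "?R \<subseteq> (?E \<union> {(a e, b e), (b e, a e)})\<^sup>*" by (rule rtrancl_mono) blast
      show "(?E \<union> {(a e, b e), (b e, a e)})\<^sup>* \<subseteq> ?R"
        unfolding rtrancl_add_sym_edge[OF sym_gE]
      proof (intro Un_least subsetI)
        fix z assume "z \<in> ?R" then show "z \<in> ?R" .
      next
        fix z assume "z \<in> {(x, y). (x, a e) \<in> ?R \<and> (b e, y) \<in> ?R}"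
        then obtain x y where z: "z = (x,y)" "(x, a e) \<in> ?R" "(b e, y) \<in> ?R" by blast
        then show "z \<in> ?R" using True rtrancl_trans by metis
      next
        fix z assume "z \<in> {(x, y). (x, b e) \<in> ?R \<and> (a e, y) \<in> ?R}"
        then obtain x y where z: "z = (x,y)" "(x, b e) \<in> ?R" "(a e, y) \<in> ?R" by blast
        have "(b e, a e) \<in> ?R" using sR[OF True] .
        then show "z \<in> ?R" using z rtrancl_trans by metis
      qed
    qed
    then show ?thesis using IH d R' by simp
  next
    case False
    have "ind (b e) - ind (a e) \<notin> fvs.span (bvec a b ` F)"
      by (rule not_path_not_span[OF False fW ae ends])
    then have "bvec a b e \<notin> fvs.span (bvec a b ` F)" using bvec_ind by metis
    then have d: "fvs.dim (bvec a b ` insert e F) = fvs.dim (bvec a b ` F) + 1"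
      unfolding im fvs_dim_insert[OF fin] by simp
    have c: "card (W // (?E \<union> {(a e, b e), (b e, a e)})\<^sup>*) + 1 = card (W // ?R)"
      by (rule card_merge[OF sym_gE fW ae be False])
    show ?thesis using IH d c R' by simp
  qed
qed

lemma fvs_linearI:
  assumes "\<And>x y. f (x + y) = f x + f y" "\<And>c x. f (fscale c x) = fscale c (f x)"
  shows "Vector_Spaces.linear (fscale :: real \<Rightarrow> ('a \<Rightarrow> real) \<Rightarrow> _) (fscale :: real \<Rightarrow> ('b \<Rightarrow> real) \<Rightarrow> _) f"
proof -
  have "vector_space (fscale :: real \<Rightarrow> ('a \<Rightarrow> real) \<Rightarrow> _)" "vector_space (fscale :: real \<Rightarrow> ('b \<Rightarrow> real) \<Rightarrow> _)"
    by (rule fvs.vector_space_axioms)+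
  then show ?thesis unfolding Vector_Spaces.linear_iff using assms by blast
qed

lemma subspace_coord: "fvs.subspace (coord_space X)"
  by (rule fvs.subspaceI) (auto simp: coord_space_def fscale_def)

lemma coord_as_sum:
  assumes "finite X" "x \<in> coord_space X"
  shows "x = (\<Sum>e\<in>X. fscale (x e) (ind e))"
proof (rule ext)
  fix v
  have "(\<Sum>e\<in>X. fscale (x e) (ind e)) v = (\<Sum>e\<in>X. if e = v then x e else 0)"
    unfolding sum_fun_apply by (intro sum.cong) (auto simp: fscale_def ind_def)
  also have "\<dots> = x v" using assms by (auto simp: coord_space_def)
  finally show "x v = (\<Sum>e\<in>X. fscale (x e) (ind e)) v" by simp
qed

lemma coord_span:
  assumes "finite X"
  shows "coord_space X \<subseteq> fvs.span (ind ` X)"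
proof
  fix x assume x: "x \<in> coord_space X"
  have "(\<Sum>e\<in>X. fscale (x e) (ind e)) \<in> fvs.span (ind ` X)"
    by (intro fvs.span_sum fvs.span_scale fvs.span_base) simp
  then show "x \<in> fvs.span (ind ` X)" using coord_as_sum[OF assms x] by simp
qed

lemma ind_coord: "e \<in> X \<Longrightarrow> ind e \<in> coord_space X"
  by (simp add: ind_def coord_space_def)

lemma lin_Bmacro: "Vector_Spaces.linear fscale fscale (Bmacro Q1 A B)"
  by (rule fvs_linearI; rule ext) (simp_all add: Bmacro_def fscale_def distrib_left distrib_right sum.distrib sum_distrib_left mult.assoc mult.left_commute)

lemma lin_bdry: "Vector_Spaces.linear fscale fscale (bdry Q1 A B)"
  by (rule fvs_linearI; rule ext) (simp_all add: bdry_def fscale_def distrib_left distrib_right sum.distrib sum_distrib_left mult.assoc mult.left_commute)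

lemma lin_trunc: "Vector_Spaces.linear fscale fscale (trunc k)"
  by (rule fvs_linearI; rule ext) (simp_all add: trunc_def fscale_def)

lemma lin_phihat: "Vector_Spaces.linear fscale fscale (phihat Q1 A B)"
  by (rule fvs_linearI; rule ext) (simp_all add: phihat_def fscale_def distrib_left distrib_right sum.distrib sum_distrib_left mult.assoc mult.left_commute)

lemma lin_adj: "Vector_Spaces.linear fscale fscale (bdry_adj Q0 Q1 A B k)"
  by (rule fvs_linearI; rule ext) (simp_all add: bdry_adj_def fscale_def distrib_left distrib_right sum.distrib sum_distrib_left mult.assoc mult.left_commute)

lemma lin_M: "Vector_Spaces.linear fscale fscale (trunc k \<circ> bdry Q1 A B)"
  by (rule Vector_Spaces.linear_compose[OF lin_bdry lin_trunc])

lemma lin_P: "Vector_Spaces.linear fscale fscale (trunc k \<circ> phihat Q1 A B)"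
  by (rule Vector_Spaces.linear_compose[OF lin_phihat lin_trunc])

lemma lin_L: "Vector_Spaces.linear fscale fscale (Lop Q0 Q1 A B k)"
proof -
  have "Lop Q0 Q1 A B k = bdry_adj Q0 Q1 A B k \<circ> (trunc k \<circ> bdry Q1 A B)"
    by (simp add: Lop_def fun_eq_iff)
  then show ?thesis using Vector_Spaces.linear_compose[OF lin_M lin_adj] by simp
qed

lemma Bmacro_sum: "Bmacro Q1 A B x = (\<Sum>e\<in>Q1. fscale (x e) (bvec A B e))"
  by (rule ext) (simp add: Bmacro_def sum_fun_apply fscale_def bvec_def)

lemma Bmacro_image:
  assumes fQ: "finite Q1"
  shows "Bmacro Q1 A B ` coord_space Q1 = fvs.span (bvec A B ` Q1)"
proof
  show "Bmacro Q1 A B ` coord_space Q1 \<subseteq> fvs.span (bvec A B ` Q1)"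
  proof
    fix y assume "y \<in> Bmacro Q1 A B ` coord_space Q1"
    then obtain x where "y = Bmacro Q1 A B x" by blast
    then show "y \<in> fvs.span (bvec A B ` Q1)" unfolding Bmacro_sum
      by (simp add: fvs.span_sum fvs.span_scale fvs.span_base)
  qed
  show "fvs.span (bvec A B ` Q1) \<subseteq> Bmacro Q1 A B ` coord_space Q1"
  proof (rule fvs.span_minimal)
    interpret lb: Vector_Spaces.linear fscale fscale "Bmacro Q1 A B" by (rule lin_Bmacro)
    show "fvs.subspace (Bmacro Q1 A B ` coord_space Q1)"
      by (rule lb.subspace_image[OF subspace_coord])
    show "bvec A B ` Q1 \<subseteq> Bmacro Q1 A B ` coord_space Q1"
    proof
      fix y assume "y \<in> bvec A B ` Q1"
      then obtain e where e: "e \<in> Q1" "y = bvec A B e" by blast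
      have "Bmacro Q1 A B (ind e) = bvec A B e"
      proof (rule ext)
        fix v
        have "Bmacro Q1 A B (ind e) v = (\<Sum>e'\<in>Q1. (if e' = e then bvec A B e' v else 0))"
          unfolding Bmacro_def bvec_def ind_def by (intro sum.cong) auto
        also have "\<dots> = bvec A B e v" using e(1) fQ by simp
        finally show "Bmacro Q1 A B (ind e) v = bvec A B e v" .
      qed
      then show "y \<in> Bmacro Q1 A B ` coord_space Q1" using e ind_coord by (metis image_eqI)
    qed
  qed
qed

lemma phihat_Bmacro:
  assumes fQ: "finite Q1"
  shows "phihat Q1 A B (Bmacro Q1 A B x) = bdry Q1 A B x"
proof (rule ext)
  fix w
  let ?V = "Vmacro Q1 A B"
  have fV: "finite ?V" using fQ by (simp add: Vmacro_def)
  have "phihat Q1 A B (Bmacro Q1 A B x) w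
      = (\<Sum>v\<in>?V. \<Sum>e\<in>Q1. x e * ((if v = B e then 1 else 0) - (if v = A e then 1 else 0)) * v w)"
    by (simp add: phihat_def Bmacro_def sum_distrib_right)
  also have "\<dots> = (\<Sum>e\<in>Q1. \<Sum>v\<in>?V. x e * ((if v = B e then 1 else 0) - (if v = A e then 1 else 0)) * v w)"
    by (rule sum.swap)
  also have "\<dots> = (\<Sum>e\<in>Q1. x e * (B e w - A e w))"
  proof (rule sum.cong[OF refl])
    fix e assume e: "e \<in> Q1"
    have AV: "A e \<in> ?V" and BV: "B e \<in> ?V" using e by (auto simp: Vmacro_def)
    have "(\<Sum>v\<in>?V. x e * ((if v = B e then 1 else 0) - (if v = A e then 1 else 0)) * v w)
        = (\<Sum>v\<in>?V. (if v = B e then x e * v w else 0)) - (\<Sum>v\<in>?V. (if v = A e then x e * v w else 0))"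
      by (simp add: sum_subtractf[symmetric] algebra_simps) (intro sum.cong; simp)
    also have "\<dots> = x e * B e w - x e * A e w" using fV AV BV by simp
    finally show "(\<Sum>v\<in>?V. x e * ((if v = B e then 1 else 0) - (if v = A e then 1 else 0)) * v w) = x e * (B e w - A e w)"
      by (simp add: algebra_simps)
  qed
  also have "\<dots> = bdry Q1 A B x w" by (simp add: bdry_def)
  finally show "phihat Q1 A B (Bmacro Q1 A B x) w = bdry Q1 A B x w" .
qed


lemma finite_words_le:
  assumes "finite Q0"
  shows "finite (words_le Q0 k)"
proof -
  have "words_le Q0 k \<subseteq> {w. set w \<subseteq> Q0 \<and> length w \<le> nat k}"
    unfolding words_le_def by auto
  then show ?thesis using finite_lists_length_le[OF assms] finite_subset by blast
qed

lemma ker_eq: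
  assumes tl: "tl_hypergraph Q0 Q1 A B"
  shows "Lop Q0 Q1 A B k x = 0 \<longleftrightarrow> trunc k (bdry Q1 A B x) = 0"
proof
  assume h: "trunc k (bdry Q1 A B x) = 0"
  show "Lop Q0 Q1 A B k x = 0"
  proof (rule ext)
    fix e
    show "Lop Q0 Q1 A B k x e = 0 e" unfolding Lop_def h by (simp add: bdry_adj_def)
  qed
next
  assume L0: "Lop Q0 Q1 A B k x = 0"
  define m where "m = trunc k (bdry Q1 A B x)"
  define W0 where "W0 = words_le Q0 k"
  have fQ0: "finite Q0" and fQ1: "finite Q1" and tens: "\<forall>e\<in>Q1. is_tensor Q0 (A e) \<and> is_tensor Q0 (B e)"
    using tl unfolding tl_hypergraph_def by auto
  have fW0: "finite W0" unfolding W0_def by (rule finite_words_le[OF fQ0])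
  have e0: "(\<Sum>w\<in>W0. (B e w - A e w) * m w) = 0" if "e \<in> Q1" for e
  proof -
    have "Lop Q0 Q1 A B k x e = 0" using L0 by simp
    then show ?thesis using that unfolding Lop_def bdry_adj_def m_def W0_def by simp
  qed
  have "(\<Sum>w\<in>W0. m w * bdry Q1 A B x w) = (\<Sum>w\<in>W0. \<Sum>e\<in>Q1. x e * ((B e w - A e w) * m w))"
    unfolding bdry_def by (simp add: sum_distrib_left mult_ac)
  also have "\<dots> = (\<Sum>e\<in>Q1. x e * (\<Sum>w\<in>W0. (B e w - A e w) * m w))"
    by (subst sum.swap) (simp add: sum_distrib_left)
  also have "\<dots> = 0" using e0 by simp
  finally have s0: "(\<Sum>w\<in>W0. m w * bdry Q1 A B x w) = 0" .
  have "(\<Sum>w\<in>W0. m w * bdry Q1 A B x w) = (\<Sum>w\<in>W0. (m w)^2)"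
    by (intro sum.cong) (auto simp: W0_def words_le_def m_def trunc_def power2_eq_square)
  then have "(\<Sum>w\<in>W0. (m w)^2) = 0" using s0 by simp
  then have mz: "\<forall>w\<in>W0. (m w)^2 = 0" using sum_nonneg_eq_0_iff[OF fW0, of "\<lambda>w. (m w)^2"] by simp
  show "m = 0"
  proof (rule ext)
    fix w
    show "m w = 0 w"
    proof (cases "w \<in> W0")
      case True then show ?thesis using mz by simp
    next
      case False
      show ?thesis
      proof (cases "int (length w) \<le> k")
        case False then show ?thesis by (simp add: m_def trunc_def)
      next
        case True
        then have nQ: "\<not> set w \<subseteq> Q0" using \<open>w \<notin> W0\<close> by (simp add: W0_def words_le_def)
        have "A e w = 0 \<and> B e w = 0" if "e \<in> Q1" for e
          using tens that nQ unfolding is_tensor_def by blast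
        then have "bdry Q1 A B x w = 0" unfolding bdry_def by simp
        then show ?thesis by (simp add: m_def trunc_def)
      qed
    qed
  qed
qed


lemma rank_delta:
  fixes Q0 :: "'v set" and Q1 :: "'e set" and A B :: "'e \<Rightarrow> 'v list \<Rightarrow> real"
  assumes tl: "tl_hypergraph Q0 Q1 A B" and j: "0 \<le> j"
  shows "int (rankL Q0 Q1 A B j) + delta_le Q1 A B j = delta_le Q1 A B (-1)"
proof -
  have fQ0: "finite Q0" and fQ1: "finite Q1"
    using tl unfolding tl_hypergraph_def by auto
  let ?S = "coord_space Q1 :: ('e \<Rightarrow> real) set"
  let ?V = "Vmacro Q1 A B"
  let ?U = "Bmacro Q1 A B ` ?S"
  let ?M = "trunc j \<circ> bdry Q1 A B"
  let ?P = "trunc j \<circ> phihat Q1 A B"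
  let ?L = "Lop Q0 Q1 A B j"
  have fV: "finite ?V" using fQ1 by (simp add: Vmacro_def)
  have U: "?U = fvs.span (bvec A B ` Q1)" by (rule Bmacro_image[OF fQ1])
  have ends: "\<forall>e\<in>Q1. A e \<in> ?V \<and> B e \<in> ?V" by (simp add: Vmacro_def)
  have gr: "int (fvs.dim (bvec A B ` Q1)) + int (card (?V // (gE Q1 A B)\<^sup>*)) = int (card ?V)"
    by (rule graph_rank[OF fV fQ1 ends])
  have conn: "(gE Q1 A B)\<^sup>* = macro_conn Q1 A B" unfolding gE_def macro_conn_def ..
  have dU: "int (fvs.dim ?U) = delta_le Q1 A B (-1)"
    using gr unfolding U fvs.dim_span conn by (simp add: delta_le_def c_macro_def)
  have Sspan: "?S \<subseteq> fvs.span (ind ` Q1)" by (rule coord_span[OF fQ1])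
  have fI: "finite (ind ` Q1)" using fQ1 by simp
  have rnL: "fvs.dim (?L ` ?S) + fvs.dim {x\<in>?S. ?L x = 0} = fvs.dim ?S"
    by (rule rank_nullity_fvs[OF lin_L subspace_coord fI Sspan])
  have rnM: "fvs.dim (?M ` ?S) + fvs.dim {x\<in>?S. ?M x = 0} = fvs.dim ?S"
    by (rule rank_nullity_fvs[OF lin_M subspace_coord fI Sspan])
  have kers: "{x\<in>?S. ?L x = 0} = {x\<in>?S. ?M x = 0}"
    using ker_eq[OF tl] by auto
  have rk: "rankL Q0 Q1 A B j = fvs.dim (?M ` ?S)"
    using rnL rnM kers j by (simp add: rankL_def)
  have fb: "finite (bvec A B ` Q1)" using fQ1 by simp
  have rnP: "fvs.dim (?P ` ?U) + fvs.dim {y\<in>?U. ?P y = 0} = fvs.dim ?U"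
    by (rule rank_nullity_fvs[OF lin_P _ fb]) (simp_all add: U)
  have PB: "?P \<circ> Bmacro Q1 A B = ?M"
  proof (rule ext)
    fix x show "(?P \<circ> Bmacro Q1 A B) x = ?M x" by (simp add: phihat_Bmacro[OF fQ1])
  qed
  have PU: "?P ` ?U = ?M ` ?S"
    unfolding image_comp PB ..
  have Ucoord: "?U \<subseteq> coord_space ?V"
  proof
    fix y assume "y \<in> ?U"
    then obtain x where y: "y = Bmacro Q1 A B x" by blast
    have "y v = 0" if "v \<notin> ?V" for v
    proof -
      have "A e \<noteq> v \<and> B e \<noteq> v" if "e \<in> Q1" for e using ends that \<open>v \<notin> ?V\<close> by blast
      then show ?thesis unfolding y Bmacro_def by (intro sum.neutral) auto
    qed
    then show "y \<in> coord_space ?V" by (simp add: coord_space_def)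
  qed
  have dset: "?U \<inter> {y \<in> coord_space ?V. trunc j (phihat Q1 A B y) = (\<lambda>_. 0)} = {y\<in>?U. ?P y = 0}"
    using Ucoord by (auto simp: zero_fun_def)
  have dj: "delta_le Q1 A B j = int (fvs.dim {y\<in>?U. ?P y = 0})"
    using j dset by (simp add: delta_le_def)
  show ?thesis using dU dj rk rnP PU by simp
qed

theorem corollary6p11:
  fixes Q0 :: "'v set" and Q1 :: "'e set"
    and A B :: "'e \<Rightarrow> 'v list \<Rightarrow> real"
    and k :: nat
  assumes "tl_hypergraph Q0 Q1 A B"
  shows "int (rankL Q0 Q1 A B (int k)) - int (rankL Q0 Q1 A B (int k - 1))
           = delta_le Q1 A B (int k - 1) - delta_le Q1 A B (int k)"
proof (cases "k = 0")
  case True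
  have "int (rankL Q0 Q1 A B 0) + delta_le Q1 A B 0 = delta_le Q1 A B (-1)"
    using rank_delta[OF assms, of 0] by simp
  moreover have "rankL Q0 Q1 A B (-1) = 0" by (simp add: rankL_def)
  ultimately show ?thesis using True by simp
next
  case False
  have a: "int (rankL Q0 Q1 A B (int k)) + delta_le Q1 A B (int k) = delta_le Q1 A B (-1)"
    using rank_delta[OF assms, of "int k"] by simp
  have b: "int (rankL Q0 Q1 A B (int k - 1)) + delta_le Q1 A B (int k - 1) = delta_le Q1 A B (-1)"
    using rank_delta[OF assms, of "int k - 1"] False by simp
  show ?thesis using a b by simp
qed

end
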